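(* Let $S$ be a finite collection of squares of sizes $d_i\times d_i$, where each $d_i$ is a power of two. Then the squares of $S$ can be placed axis-parallel in the plane without overlapping so that they fully cover an axis-parallel square of side length at least $\frac12\sqrt{\sum_i d_i^2}$. *)

theory Defs
  imports Complex_Main
begin

definition csq :: "real \<Rightarrow> real \<Rightarrow> real \<Rightarrow> (real \<times> real) set" where
  "csq a b d = {(x, y). a \<le> x \<and> x \<le> a + d \<and> b \<le> y \<and> y \<le> b + d}"

definition osq :: "real \<Rightarrow> real \<Rightarrow> real \<Rightarrow> (real \<times> real) set" where
  "osq a b d = {(x, y). a < x \<and> x < a + d \<and> b < y \<and> y < b + d}"

end

theory Submission
  imports Defs
begin

definition rect :: "real \<Rightarrow> real \<Rightarrow> real \<Rightarrow> real \<Rightarrow> (real \<times> real) set" where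
  "rect X Y W H = {(x, y). X \<le> x \<and> x \<le> X + W \<and> Y \<le> y \<and> y \<le> Y + H}"

definition placed :: "(nat \<Rightarrow> real) \<Rightarrow> (nat \<Rightarrow> real) \<Rightarrow> (nat \<Rightarrow> real) \<Rightarrow> nat set
   \<Rightarrow> real \<Rightarrow> real \<Rightarrow> real \<Rightarrow> real \<Rightarrow> bool" where
  "placed a b d A X Y W H \<longleftrightarrow>
     (\<forall>i\<in>A. X \<le> a i \<and> a i + d i \<le> X + W \<and> Y \<le> b i \<and> b i + d i \<le> Y + H) \<and>
     (\<forall>i\<in>A. \<forall>j\<in>A. i \<noteq> j \<longrightarrow> osq (a i) (b i) (d i) \<inter> osq (a j) (b j) (d j) = {})"

definition cov :: "(nat \<Rightarrow> real) \<Rightarrow> (nat \<Rightarrow> real) \<Rightarrow> (nat \<Rightarrow> real) \<Rightarrow> nat set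
   \<Rightarrow> real \<Rightarrow> real \<Rightarrow> real \<Rightarrow> real \<Rightarrow> bool" where
  "cov a b d A X Y W H \<longleftrightarrow> rect X Y W H \<subseteq> (\<Union>i\<in>A. csq (a i) (b i) (d i))"

lemma csq_rect: "csq a b d = rect a b d d"
  by (simp add: csq_def rect_def)

lemma sepx: "a + d \<le> a' \<Longrightarrow> osq a b d \<inter> osq a' b' d' = {}"
  by (auto simp: osq_def)

lemma sepy: "b + d \<le> b' \<Longrightarrow> osq a b d \<inter> osq a' b' d' = {}"
  by (auto simp: osq_def)

lemma combine_placed:
  assumes p1: "placed a1 b1 d A X1 Y1 W1 H1" and p2: "placed a2 b2 d B X2 Y2 W2 H2"
    and dis: "A \<inter> B = {}" and sep: "X1 + W1 \<le> X2 \<or> Y1 + H1 \<le> Y2"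
    and bb: "X \<le> X1" "X1 + W1 \<le> X + W" "Y \<le> Y1" "Y1 + H1 \<le> Y + H"
            "X \<le> X2" "X2 + W2 \<le> X + W" "Y \<le> Y2" "Y2 + H2 \<le> Y + H"
  shows "placed (\<lambda>i. if i \<in> A then a1 i else a2 i) (\<lambda>i. if i \<in> A then b1 i else b2 i) d (A \<union> B) X Y W H"
proof -
  let ?a = "\<lambda>i. if i \<in> A then a1 i else a2 i"
  let ?b = "\<lambda>i. if i \<in> A then b1 i else b2 i"
  have cross: "osq (a1 i) (b1 i) (d i) \<inter> osq (a2 j) (b2 j) (d j) = {}" if "i \<in> A" "j \<in> B" for i j
  proof -
    have h1: "X1 \<le> a1 i" "a1 i + d i \<le> X1 + W1" "Y1 \<le> b1 i" "b1 i + d i \<le> Y1 + H1"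
      using p1 that unfolding placed_def by auto
    have h2: "X2 \<le> a2 j" "a2 j + d j \<le> X2 + W2" "Y2 \<le> b2 j" "b2 j + d j \<le> Y2 + H2"
      using p2 that unfolding placed_def by auto
    from sep show ?thesis
    proof
      assume "X1 + W1 \<le> X2"
      then have "a1 i + d i \<le> a2 j" using h1 h2 by linarith
      then show ?thesis by (rule sepx)
    next
      assume "Y1 + H1 \<le> Y2"
      then have "b1 i + d i \<le> b2 j" using h1 h2 by linarith
      then show ?thesis by (rule sepy)
    qed
  qed
  show ?thesis
    unfolding placed_def
  proof (rule conjI; intro ballI impI)
    fix i assume "i \<in> A \<union> B"
    then show "X \<le> ?a i \<and> ?a i + d i \<le> X + W \<and> Y \<le> ?b i \<and> ?b i + d i \<le> Y + H"
    proof (cases "i \<in> A")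
      case True
      then have "X1 \<le> a1 i" "a1 i + d i \<le> X1 + W1" "Y1 \<le> b1 i" "b1 i + d i \<le> Y1 + H1"
        using p1 unfolding placed_def by auto
      then show ?thesis using True bb by simp
    next
      case False
      then have "i \<in> B" using \<open>i \<in> A \<union> B\<close> by auto
      then have "X2 \<le> a2 i" "a2 i + d i \<le> X2 + W2" "Y2 \<le> b2 i" "b2 i + d i \<le> Y2 + H2"
        using p2 unfolding placed_def by auto
      then show ?thesis using False bb by simp
    qed
  next
    fix i j assume ij: "i \<in> A \<union> B" "j \<in> A \<union> B" "i \<noteq> j"
    show "osq (?a i) (?b i) (d i) \<inter> osq (?a j) (?b j) (d j) = {}"
    proof (cases "i \<in> A")
      case True
      then show ?thesis
      proof (cases "j \<in> A")
        case True
        then show ?thesis using \<open>i \<in> A\<close> ij p1 unfolding placed_def by auto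
      next
        case False
        then show ?thesis using \<open>i \<in> A\<close> ij cross by auto
      qed
    next
      case False
      then show ?thesis
      proof (cases "j \<in> A")
        case True
        then show ?thesis using \<open>i \<notin> A\<close> ij cross[of j i] by auto
      next
        case False
        then show ?thesis using \<open>i \<notin> A\<close> ij p2 unfolding placed_def by auto
      qed
    qed
  qed
qed

lemma combine_cov:
  assumes c1: "cov a1 b1 d A X1 Y1 W1 H1" and c2: "cov a2 b2 d B X2 Y2 W2 H2"
    and dis: "A \<inter> B = {}" and sub: "rect X Y W H \<subseteq> rect X1 Y1 W1 H1 \<union> rect X2 Y2 W2 H2"
  shows "cov (\<lambda>i. if i \<in> A then a1 i else a2 i) (\<lambda>i. if i \<in> A then b1 i else b2 i) d (A \<union> B) X Y W H"
proof -
  have "rect X1 Y1 W1 H1 \<subseteq> (\<Union>i\<in>A \<union> B. csq (if i \<in> A then a1 i else a2 i) (if i \<in> A then b1 i else b2 i) (d i))"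
    using c1 unfolding cov_def by fastforce
  moreover have "rect X2 Y2 W2 H2 \<subseteq> (\<Union>i\<in>A \<union> B. csq (if i \<in> A then a1 i else a2 i) (if i \<in> A then b1 i else b2 i) (d i))"
  proof
    fix p assume "p \<in> rect X2 Y2 W2 H2"
    then obtain j where "j \<in> B" "p \<in> csq (a2 j) (b2 j) (d j)" using c2 unfolding cov_def by blast
    moreover have "j \<notin> A" using dis \<open>j \<in> B\<close> by auto
    ultimately show "p \<in> (\<Union>i\<in>A \<union> B. csq (if i \<in> A then a1 i else a2 i) (if i \<in> A then b1 i else b2 i) (d i))"
      by force
  qed
  ultimately show ?thesis using sub unfolding cov_def by blast
qed

lemma split_list:
  fixes e :: "nat \<Rightarrow> nat"
  assumes "sorted_wrt (\<lambda>i j. e j \<le> e i) xs" "\<forall>i\<in>set xs. (4::nat)^(e i) dvd G"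
    "G \<le> sum_list (map (\<lambda>i. (4::nat)^(e i)) xs)"
  shows "\<exists>ys zs. xs = ys @ zs \<and> sum_list (map (\<lambda>i. (4::nat)^(e i)) ys) = G"
  using assms
proof (induction xs arbitrary: G)
  case Nil
  then show ?case by auto
next
  case (Cons h rest)
  show ?case
  proof (cases "G = 0")
    case True
    then show ?thesis by (intro exI[of _ "[]"] exI[of _ "h # rest"]) simp
  next
    case False
    have "4^(e h) dvd G" using Cons.prems by auto
    then have ge: "4^(e h) \<le> G" using False by (simp add: dvd_imp_le)
    define G' where "G' = G - 4^(e h)"
    have "\<forall>i\<in>set rest. (4::nat)^(e i) dvd G'"
    proof
      fix i assume i: "i \<in> set rest"
      then have "e i \<le> e h" using Cons.prems(1) by auto
      then have "(4::nat)^(e i) dvd 4^(e h)" by (simp add: le_imp_power_dvd)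
      moreover have "(4::nat)^(e i) dvd G" using Cons.prems(2) i by auto
      ultimately show "(4::nat)^(e i) dvd G'" unfolding G'_def by (simp add: dvd_diff_nat)
    qed
    moreover have "G' \<le> sum_list (map (\<lambda>i. (4::nat)^(e i)) rest)"
      using Cons.prems(3) ge unfolding G'_def by auto
    moreover have "sorted_wrt (\<lambda>i j. e j \<le> e i) rest" using Cons.prems(1) by auto
    ultimately obtain ys zs where "rest = ys @ zs" "sum_list (map (\<lambda>i. (4::nat)^(e i)) ys) = G'"
      using Cons.IH by blast
    then show ?thesis using ge unfolding G'_def by (intro exI[of _ "h # ys"] exI[of _ zs]) auto
  qed
qed


lemma rect_splitx: "rect X Y (W1 + W2) H \<subseteq> rect X Y W1 H \<union> rect (X + W1) Y W2 H"
  by (auto simp: rect_def)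

lemma rect_splity: "rect X Y W (H1 + H2) \<subseteq> rect X Y W H1 \<union> rect X (Y + H1) W H2"
  by (auto simp: rect_def)

lemma single:
  assumes "d i \<ge> 0"
  shows "placed (\<lambda>_. x0) (\<lambda>_. y0) d {i} x0 y0 (d i) (d i) \<and> cov (\<lambda>_. x0) (\<lambda>_. y0) d {i} x0 y0 (d i) (d i)"
  using assms by (auto simp: placed_def cov_def csq_rect)

lemma tile:
  fixes e :: "nat \<Rightarrow> nat" and d :: "nat \<Rightarrow> real" and c :: real
  assumes c: "c > 0"
  shows "distinct xs \<Longrightarrow> sorted_wrt (\<lambda>i j. e j \<le> e i) xs \<Longrightarrow>
    (\<forall>i\<in>set xs. e i \<le> t \<and> d i = c * 2^(e i)) \<Longrightarrow>
    sum_list (map (\<lambda>i. (4::nat)^(e i)) xs) = 4^t \<Longrightarrow>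
    \<exists>a b. placed a b d (set xs) x0 y0 (c*2^t) (c*2^t) \<and> cov a b d (set xs) x0 y0 (c*2^t) (c*2^t)"
proof (induction t arbitrary: xs x0 y0)
  case 0
  have "sum_list (map (\<lambda>i. (4::nat)^(e i)) xs) = sum (\<lambda>i. (4::nat)^(e i)) (set xs)"
    using 0 by (simp add: sum_list_distinct_conv_sum_set)
  also have "\<dots> = sum (\<lambda>i. 1) (set xs)" using 0 by (intro sum.cong) auto
  finally have "card (set xs) = 1" using 0 by simp
  then obtain i where i: "set xs = {i}" by (auto simp: card_Suc_eq)
  then have "d i = c * 2^0" using 0 by auto
  then show ?case using single[of d i x0 y0] i c by auto
next
  case (Suc t)
  define f where "f = (\<lambda>i. (4::nat)^(e i))"
  have sumset: "sum f (set xs) = 4^Suc t"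
    using Suc.prems by (simp add: sum_list_distinct_conv_sum_set f_def)
  show ?case
  proof (cases "\<exists>i\<in>set xs. e i = Suc t")
    case True
    then obtain i where i: "i \<in> set xs" "e i = Suc t" by auto
    have "sum f (set xs) = f i + sum f (set xs - {i})"
      using i(1) by (meson List.finite_set sum.remove)
    moreover have fi: "f i = 4^Suc t" unfolding f_def using i(2) by simp
    ultimately have s0: "sum f (set xs - {i}) = 0" using sumset by linarith
    have "set xs - {i} = {}"
    proof (rule ccontr)
      assume "set xs - {i} \<noteq> {}"
      then obtain j where j: "j \<in> set xs - {i}" by blast
      have "f j \<le> sum f (set xs - {i})" by (rule member_le_sum) (use j in auto)
      moreover have "f j > 0" unfolding f_def by simp
      ultimately show False using s0 by linarith
    qed
    then have si: "set xs = {i}" using i by auto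
    have "d i = c * 2^Suc t" using Suc.prems(3) i by auto
    then show ?thesis using single[of d i x0 y0] si c by auto
  next
    case False
    then have all: "\<forall>i\<in>set xs. e i \<le> t" using Suc.prems(3) by (auto simp: le_Suc_eq)
    have dv: "\<forall>i\<in>set ys. (4::nat)^(e i) dvd 4^t" if "set ys \<subseteq> set xs" for ys
      using all that by (auto intro: le_imp_power_dvd)
    have tot: "sum_list (map f xs) = 4 * 4^t" using Suc.prems(4) by (simp add: f_def)
    have "\<exists>ys zs. xs = ys @ zs \<and> sum_list (map (\<lambda>i. (4::nat)^(e i)) ys) = 4^t"
    proof (rule split_list)
      show "sorted_wrt (\<lambda>i j. e j \<le> e i) xs" by (rule Suc.prems(2))
      show "\<forall>i\<in>set xs. (4::nat)^(e i) dvd 4^t" using dv[of xs] by simp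
      show "4^t \<le> sum_list (map (\<lambda>i. (4::nat)^(e i)) xs)" using tot unfolding f_def by simp
    qed
    then obtain g1 r1 where x1: "xs = g1 @ r1" and s1: "sum_list (map f g1) = 4^t"
      unfolding f_def by blast
    have t1: "sum_list (map f r1) = 3 * 4^t" using tot s1 x1 by simp
    have so1: "sorted_wrt (\<lambda>i j. e j \<le> e i) r1" using Suc.prems(2) unfolding x1 sorted_wrt_append by blast
    have "\<exists>ys zs. r1 = ys @ zs \<and> sum_list (map (\<lambda>i. (4::nat)^(e i)) ys) = 4^t"
    proof (rule split_list)
      show "sorted_wrt (\<lambda>i j. e j \<le> e i) r1" by (rule so1)
      show "\<forall>i\<in>set r1. (4::nat)^(e i) dvd 4^t" using dv[of r1] x1 by auto
      show "4^t \<le> sum_list (map (\<lambda>i. (4::nat)^(e i)) r1)" using t1 unfolding f_def by simp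
    qed
    then obtain g2 r2 where x2: "r1 = g2 @ r2" and s2: "sum_list (map f g2) = 4^t"
      unfolding f_def by blast
    have t2: "sum_list (map f r2) = 2 * 4^t" using t1 s2 x2 by simp
    have so2: "sorted_wrt (\<lambda>i j. e j \<le> e i) r2" using so1 unfolding x2 sorted_wrt_append by blast
    have "\<exists>ys zs. r2 = ys @ zs \<and> sum_list (map (\<lambda>i. (4::nat)^(e i)) ys) = 4^t"
    proof (rule split_list)
      show "sorted_wrt (\<lambda>i j. e j \<le> e i) r2" by (rule so2)
      show "\<forall>i\<in>set r2. (4::nat)^(e i) dvd 4^t" using dv[of r2] x1 x2 by auto
      show "4^t \<le> sum_list (map (\<lambda>i. (4::nat)^(e i)) r2)" using t2 unfolding f_def by simp
    qed
    then obtain g3 g4 where x3: "r2 = g3 @ g4" and s3: "sum_list (map f g3) = 4^t"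
      unfolding f_def by blast
    have s4: "sum_list (map f g4) = 4^t" using t2 s3 x3 by simp
    have xs: "xs = g1 @ g2 @ g3 @ g4" using x1 x2 x3 by simp
    have props: "distinct g \<and> sorted_wrt (\<lambda>i j. e j \<le> e i) g \<and> (\<forall>i\<in>set g. e i \<le> t \<and> d i = c * 2^(e i))"
      if "g \<in> {g1, g2, g3, g4}" for g
      using that Suc.prems(1,2,3) all unfolding xs by (auto simp: sorted_wrt_append)
    have disj: "set g1 \<inter> set g2 = {}" "set g3 \<inter> set g4 = {}" "(set g1 \<union> set g2) \<inter> (set g3 \<union> set g4) = {}"
      using Suc.prems(1) unfolding xs by auto
    define h where "h = c * 2^t"
    obtain a1 b1 where P1: "placed a1 b1 d (set g1) x0 y0 h h" "cov a1 b1 d (set g1) x0 y0 h h"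
      using Suc.IH[of g1 x0 y0] props[of g1] s1 unfolding f_def h_def by auto
    obtain a2 b2 where P2: "placed a2 b2 d (set g2) (x0 + h) y0 h h" "cov a2 b2 d (set g2) (x0 + h) y0 h h"
      using Suc.IH[of g2 "x0 + h" y0] props[of g2] s2 unfolding f_def h_def by auto
    obtain a3 b3 where P3: "placed a3 b3 d (set g3) x0 (y0 + h) h h" "cov a3 b3 d (set g3) x0 (y0 + h) h h"
      using Suc.IH[of g3 x0 "y0 + h"] props[of g3] s3 unfolding f_def h_def by auto
    obtain a4 b4 where P4: "placed a4 b4 d (set g4) (x0 + h) (y0 + h) h h" "cov a4 b4 d (set g4) (x0 + h) (y0 + h) h h"
      using Suc.IH[of g4 "x0 + h" "y0 + h"] props[of g4] s4 unfolding f_def h_def by auto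
    have hpos: "h > 0" using c unfolding h_def by simp
    define a12 where "a12 = (\<lambda>i. if i \<in> set g1 then a1 i else a2 i)"
    define b12 where "b12 = (\<lambda>i. if i \<in> set g1 then b1 i else b2 i)"
    have Q1: "placed a12 b12 d (set g1 \<union> set g2) x0 y0 (h + h) h"
      unfolding a12_def b12_def
      by (rule combine_placed[OF P1(1) P2(1) disj(1)]) (use hpos in auto)
    have C1: "cov a12 b12 d (set g1 \<union> set g2) x0 y0 (h + h) h"
      unfolding a12_def b12_def
      by (rule combine_cov[OF P1(2) P2(2) disj(1)]) (rule rect_splitx)
    define a34 where "a34 = (\<lambda>i. if i \<in> set g3 then a3 i else a4 i)"
    define b34 where "b34 = (\<lambda>i. if i \<in> set g3 then b3 i else b4 i)"
    have Q2: "placed a34 b34 d (set g3 \<union> set g4) x0 (y0 + h) (h + h) h"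
      unfolding a34_def b34_def
      by (rule combine_placed[OF P3(1) P4(1) disj(2)]) (use hpos in auto)
    have C2: "cov a34 b34 d (set g3 \<union> set g4) x0 (y0 + h) (h + h) h"
      unfolding a34_def b34_def
      by (rule combine_cov[OF P3(2) P4(2) disj(2)]) (rule rect_splitx)
    have Q: "placed (\<lambda>i. if i \<in> set g1 \<union> set g2 then a12 i else a34 i)
       (\<lambda>i. if i \<in> set g1 \<union> set g2 then b12 i else b34 i) d (set g1 \<union> set g2 \<union> (set g3 \<union> set g4)) x0 y0 (h + h) (h + h)"
      by (rule combine_placed[OF Q1 Q2 disj(3)]) (use hpos in auto)
    have C: "cov (\<lambda>i. if i \<in> set g1 \<union> set g2 then a12 i else a34 i)
       (\<lambda>i. if i \<in> set g1 \<union> set g2 then b12 i else b34 i) d (set g1 \<union> set g2 \<union> (set g3 \<union> set g4)) x0 y0 (h + h) (h + h)"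
      by (rule combine_cov[OF C1 C2 disj(3)]) (rule rect_splity)
    have e1: "c * 2 ^ Suc t = h + h" unfolding h_def by simp
    have e2: "set xs = set g1 \<union> set g2 \<union> (set g3 \<union> set g4)" unfolding xs by auto
    show ?thesis unfolding e1 e2 using Q C by blast
  qed
qed


lemma finish:
  fixes d :: "nat \<Rightarrow> real"
  assumes P: "placed a1 b1 d Y 0 0 s s" and C: "cov a1 b1 d Y 0 0 s s"
    and Y: "Y \<subseteq> {..<n}" and dM: "\<forall>i<n. 0 < d i \<and> d i \<le> M" and sB: "s \<ge> B"
  shows "\<exists>a b :: nat \<Rightarrow> real.
           (\<forall>i<n. \<forall>j<n. i \<noteq> j \<longrightarrow> osq (a i) (b i) (d i) \<inter> osq (a j) (b j) (d j) = {}) \<and>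
           (\<exists>x0 y0 s. s \<ge> B \<and> csq x0 y0 s \<subseteq> (\<Union>i<n. csq (a i) (b i) (d i)))"
proof -
  define a where "a = (\<lambda>i. if i \<in> Y then a1 i else s + real i * M)"
  define b where "b = (\<lambda>i. if i \<in> Y then b1 i else 0)"
  have inY: "a1 i + d i \<le> s" if "i \<in> Y" for i
    using P that unfolding placed_def by auto
  have D: "osq (a i) (b i) (d i) \<inter> osq (a j) (b j) (d j) = {}"
    if ij: "i < n" "j < n" "i \<noteq> j" for i j
  proof (cases "i \<in> Y")
    case True
    show ?thesis
    proof (cases "j \<in> Y")
      case True
      then show ?thesis using \<open>i \<in> Y\<close> P ij unfolding placed_def a_def b_def by auto
    next
      case False
      have "M \<ge> 0" using dM ij by force
      moreover have "real j * M \<ge> 0" using \<open>M \<ge> 0\<close> by simp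
      moreover have "a j = s + real j * M" "a i = a1 i" using False \<open>i \<in> Y\<close> unfolding a_def by auto
      ultimately have "a i + d i \<le> a j" using inY[OF \<open>i \<in> Y\<close>] by linarith
      then show ?thesis by (rule sepx)
    qed
  next
    case False
    show ?thesis
    proof (cases "j \<in> Y")
      case True
      have "M \<ge> 0" using dM ij by force
      moreover have "real i * M \<ge> 0" using \<open>M \<ge> 0\<close> by simp
      moreover have "a i = s + real i * M" "a j = a1 j" using False \<open>j \<in> Y\<close> unfolding a_def by auto
      ultimately have "a j + d j \<le> a i" using inY[OF \<open>j \<in> Y\<close>] by linarith
      then have "osq (a j) (b j) (d j) \<inter> osq (a i) (b i) (d i) = {}" by (rule sepx)
      then show ?thesis by blast
    next
      case False2: False
      have M0: "M \<ge> 0" using dM ij by force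
      show ?thesis
      proof (cases "i < j")
        case True
        then have "real i + 1 \<le> real j" by simp
        then have "(real i + 1) * M \<le> real j * M" using M0 by (rule mult_right_mono)
        then have "a i + d i \<le> a j" using False False2 dM ij unfolding a_def by (auto simp: algebra_simps)
        then show ?thesis by (rule sepx)
      next
        case False3: False
        then have "real j + 1 \<le> real i" using ij by simp
        then have "(real j + 1) * M \<le> real i * M" using M0 by (rule mult_right_mono)
        then have "a j + d j \<le> a i" using False False2 dM ij unfolding a_def by (auto simp: algebra_simps)
        then have "osq (a j) (b j) (d j) \<inter> osq (a i) (b i) (d i) = {}" by (rule sepx)
        then show ?thesis by blast
      qed
    qed
  qed
  have "csq 0 0 s \<subseteq> (\<Union>i<n. csq (a i) (b i) (d i))"
  proof
    fix p assume "p \<in> csq 0 0 s"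
    then obtain i where "i \<in> Y" "p \<in> csq (a1 i) (b1 i) (d i)"
      using C unfolding cov_def csq_rect by blast
    then show "p \<in> (\<Union>i<n. csq (a i) (b i) (d i))" using Y unfolding a_def b_def by force
  qed
  then show ?thesis using D sB by blast
qed

lemma two_pow_sq: "((2::real)^e)^2 = 4^e"
  by (simp add: power2_eq_square power_mult_distrib[symmetric])

theorem lemma5:
  fixes k :: "nat \<Rightarrow> int" and n :: nat
  assumes "n \<ge> 1"
  defines "d \<equiv> (\<lambda>i. (2::real) powr (real_of_int (k i)))"
  shows "\<exists>a b :: nat \<Rightarrow> real.
           (\<forall>i<n. \<forall>j<n. i \<noteq> j \<longrightarrow> osq (a i) (b i) (d i) \<inter> osq (a j) (b j) (d j) = {}) \<and>
           (\<exists>x0 y0 s. s \<ge> sqrt (\<Sum>i<n. (d i)^2) / 2 \<and>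
              csq x0 y0 s \<subseteq> (\<Union>i<n. csq (a i) (b i) (d i)))"
proof -
  define m where "m = Min (k ` {..<n})"
  define e where "e = (\<lambda>i. nat (k i - m))"
  define c where "c = (2::real) powr (real_of_int m)"
  have c0: "c > 0" unfolding c_def by simp
  have km: "m \<le> k i" if "i < n" for i
    unfolding m_def using that by (intro Min_le) auto
  have dk: "d i = c * 2^(e i)" if "i < n" for i
  proof -
    have "real_of_int (k i) = real_of_int m + real (e i)"
      using km[OF that] unfolding e_def by simp
    then have "d i = 2 powr (real_of_int m) * 2 powr (real (e i))"
      unfolding d_def by (simp add: powr_add)
    then show ?thesis unfolding c_def by (simp add: powr_realpow)
  qed
  define N where "N = (\<Sum>i<n. (4::nat)^(e i))"
  have N1: "N \<ge> 1"
  proof -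
    have "(4::nat)^(e 0) \<le> N" unfolding N_def using assms(1) by (intro member_le_sum) auto
    moreover have "(4::nat)^(e 0) \<ge> 1" by simp
    ultimately show ?thesis by linarith
  qed
  have S: "(\<Sum>i<n. (d i)^2) = c^2 * real N"
  proof -
    have "(\<Sum>i<n. (d i)^2) = (\<Sum>i<n. c^2 * 4^(e i))"
      by (rule sum.cong) (auto simp: dk power_mult_distrib two_pow_sq)
    also have "\<dots> = c^2 * real N" unfolding N_def by (simp add: sum_distrib_left)
    finally show ?thesis .
  qed
  obtain T where T: "4^T \<le> N" "N < 4^(T+1)" using ex_power_ivl1[of 4 N] N1 by auto
  define L where "L = c * 2^T"
  have L0: "L > 0" unfolding L_def using c0 by simp
  have "(\<Sum>i<n. (d i)^2) \<le> (2 * L)^2"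
  proof -
    have "real N \<le> 4^(T+1)" using T(2) by (metis less_imp_le of_nat_le_iff of_nat_numeral of_nat_power)
    then have "c^2 * real N \<le> c^2 * 4^(T+1)" by (intro mult_left_mono) auto
    also have "\<dots> = (2*L)^2" unfolding L_def by (simp add: power_mult_distrib two_pow_sq[symmetric] power_add)
    finally show ?thesis using S by simp
  qed
  then have sq: "sqrt (\<Sum>i<n. (d i)^2) / 2 \<le> L"
    using real_le_lsqrt[of "2*L"] L0 by fastforce
  have dpos: "\<forall>i<n. 0 < d i \<and> d i \<le> (\<Sum>i<n. d i)"
  proof (intro allI impI conjI)
    fix i assume "i < n"
    show "0 < d i" unfolding d_def by simp
    show "d i \<le> (\<Sum>i<n. d i)" using \<open>i < n\<close> by (intro member_le_sum) (auto simp: d_def)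
  qed
  show ?thesis
  proof (cases "\<exists>i<n. e i \<ge> T")
    case True
    then obtain i where i: "i < n" "e i \<ge> T" by auto
    have "L \<le> d i" unfolding L_def dk[OF i(1)] using c0 i(2) by simp
    then have B: "sqrt (\<Sum>i<n. (d i)^2) / 2 \<le> d i" using sq by linarith
    have "d i \<ge> 0" using dpos i by auto
    from single[of d i 0 0, OF this] have "placed (\<lambda>_. 0) (\<lambda>_. 0) d {i} 0 0 (d i) (d i)"
      "cov (\<lambda>_. 0) (\<lambda>_. 0) d {i} 0 0 (d i) (d i)" by auto
    from finish[OF this _ dpos B] show ?thesis using i by auto
  next
    case False
    then have lt: "\<forall>i<n. e i < T" by auto
    define idx where "idx = rev (sort_key e [0..<n])"
    have idist: "distinct idx" unfolding idx_def by simp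
    have iset: "set idx = {..<n}" unfolding idx_def by auto
    have isort: "sorted_wrt (\<lambda>i j. e j \<le> e i) idx"
      unfolding idx_def sorted_wrt_rev using sorted_sort_key[of e "[0..<n]"] by (simp add: sorted_map)
    have isum: "sum_list (map (\<lambda>i. (4::nat)^(e i)) idx) = N"
      using idist iset unfolding N_def by (simp add: sum_list_distinct_conv_sum_set)
    have "\<exists>ys zs. idx = ys @ zs \<and> sum_list (map (\<lambda>i. (4::nat)^(e i)) ys) = 4^T"
    proof (rule split_list)
      show "sorted_wrt (\<lambda>i j. e j \<le> e i) idx" by (rule isort)
      show "\<forall>i\<in>set idx. (4::nat)^(e i) dvd 4^T" using lt iset
        by (auto intro: le_imp_power_dvd less_imp_le)
      show "4^T \<le> sum_list (map (\<lambda>i. (4::nat)^(e i)) idx)" using isum T by simp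
    qed
    then obtain ys zs where yz: "idx = ys @ zs" and ysum: "sum_list (map (\<lambda>i. (4::nat)^(e i)) ys) = 4^T"
      by blast
    have ysub: "set ys \<subseteq> {..<n}" using iset yz by auto
    have "\<exists>a b. placed a b d (set ys) 0 0 (c*2^T) (c*2^T) \<and> cov a b d (set ys) 0 0 (c*2^T) (c*2^T)"
    proof (rule tile[OF c0])
      show "distinct ys" using idist yz by simp
      show "sorted_wrt (\<lambda>i j. e j \<le> e i) ys" using isort yz sorted_wrt_append by blast
      show "\<forall>i\<in>set ys. e i \<le> T \<and> d i = c * 2 ^ e i" using ysub lt dk by (auto intro: less_imp_le)
      show "sum_list (map (\<lambda>i. (4::nat)^(e i)) ys) = 4^T" by (rule ysum)
    qed
    then obtain a1 b1 where "placed a1 b1 d (set ys) 0 0 L L" "cov a1 b1 d (set ys) 0 0 L L"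
      unfolding L_def by blast
    from finish[OF this ysub dpos sq] show ?thesis .
  qed
qed

end
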